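(* For every $z\in\{1,\dots,m-1\}$: (i) for all integers $x\in[x_z,z]$, $d_F(\tau_{x,z},P[t_x,t_z])\le4\Delta$, and for all integers $y\in[z+1,y_z]$, $d_F(\tau_{z+1,y},P[t_{z+1},t_y])\le4\Delta$; (ii) for all integers $x\in[1,x_z)$, $d_F(\tau_{x,z},P[t_x,t_z])>2\Delta$, and for all integers $y\in(y_z,m]$, $d_F(\tau_{z+1,y},P[t_{z+1},t_y])>2\Delta$.
   Context: Let $d\ge1$ and let $P:[0,1]\to\mathbb R^d$ be a polygonal curve with breakpoint parameters $0=t_1<t_2<\dots<t_m=1$, and fix $\Delta>0$. For $0\le a\le b\le1$, $P[a,b]$ is the subcurve from $P(a)$ to $P(b)$. The Fréchet distance $d_F(P,Q)=\inf_\gamma\sup_{t\in[0,1]}\|P(\gamma(t))-Q(t)\|$, $\gamma$ over increasing homeomorphisms of $[0,1]$. For $1\le a\le b\le m$, $\tau_{a,b}$ is the segment from $P(t_a)$ to $P(t_b)$. For $z\in\{1,\dots,m-1\}$, $x_z$ is the smallest integer $x'\in\{1,\dots,z\}$ such that $d_F(\tau_{x,z},P[t_x,t_z])\le4\Delta$ for every integer $x\in[x',z]$, and $y_z$ is the largest integer $y'\in\{z+1,\dots,m\}$ such that $d_F(\tau_{z+1,y},P[t_{z+1},t_y])\le4\Delta$ for every integer $y\in[z+1,y']$. *)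

theory Defs
  imports "HOL-Analysis.Analysis"
begin

definition inc_homeo01 :: "(real \<Rightarrow> real) \<Rightarrow> bool" where
  "inc_homeo01 \<gamma> \<longleftrightarrow> \<gamma> ` {0..1} = {0..1} \<and> continuous_on {0..1} \<gamma> \<and> strict_mono_on {0..1} \<gamma>"

definition frechet_dist :: "(real \<Rightarrow> 'a::real_normed_vector) \<Rightarrow> (real \<Rightarrow> 'a) \<Rightarrow> real" where
  "frechet_dist P Q = Inf {(SUP t\<in>{0..1}. norm (P (\<gamma> t) - Q t)) | \<gamma>. inc_homeo01 \<gamma>}"

definition subcurve :: "(real \<Rightarrow> 'a::real_vector) \<Rightarrow> real \<Rightarrow> real \<Rightarrow> real \<Rightarrow> 'a" where
  "subcurve P a b = (\<lambda>s. P (a + s * (b - a)))"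

definition seg_curve :: "'a::real_vector \<Rightarrow> 'a \<Rightarrow> real \<Rightarrow> 'a" where
  "seg_curve p q = (\<lambda>s. (1 - s) *\<^sub>R p + s *\<^sub>R q)"

definition tau :: "(real \<Rightarrow> 'a::real_vector) \<Rightarrow> (nat \<Rightarrow> real) \<Rightarrow> nat \<Rightarrow> nat \<Rightarrow> real \<Rightarrow> 'a" where
  "tau P t a b = seg_curve (P (t a)) (P (t b))"

definition polygonal :: "(real \<Rightarrow> 'a::real_vector) \<Rightarrow> (nat \<Rightarrow> real) \<Rightarrow> nat \<Rightarrow> bool" where
  "polygonal P t m \<longleftrightarrow> m \<ge> 1 \<and> t 1 = 0 \<and> t m = 1 \<and> strict_mono_on {1..m} t \<and>
     (\<forall>i\<in>{1..<m}. \<forall>s\<in>{t i..t (Suc i)}.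
        P s = P (t i) + ((s - t i) / (t (Suc i) - t i)) *\<^sub>R (P (t (Suc i)) - P (t i)))"

definition x_idx :: "(real \<Rightarrow> 'a::real_normed_vector) \<Rightarrow> (nat \<Rightarrow> real) \<Rightarrow> real \<Rightarrow> nat \<Rightarrow> nat" where
  "x_idx P t \<Delta> z = (LEAST x'. x' \<in> {1..z} \<and>
     (\<forall>x\<in>{x'..z}. frechet_dist (tau P t x z) (subcurve P (t x) (t z)) \<le> 4 * \<Delta>))"

definition y_idx :: "(real \<Rightarrow> 'a::real_normed_vector) \<Rightarrow> (nat \<Rightarrow> real) \<Rightarrow> nat \<Rightarrow> real \<Rightarrow> nat \<Rightarrow> nat" where
  "y_idx P t m \<Delta> z = (GREATEST y'. y' \<in> {z+1..m} \<and>
     (\<forall>y\<in>{z+1..y'}. frechet_dist (tau P t (z+1) y) (subcurve P (t (z+1)) (t y)) \<le> 4 * \<Delta>))"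

end

theory Submission imports Defs begin

lemma homeo_props:
  assumes "inc_homeo01 g"
  shows homeo_in: "\<And>u. u\<in>{0..1} \<Longrightarrow> g u \<in> {0..1}"
    and homeo_less: "\<And>u v. u\<in>{0..1} \<Longrightarrow> v\<in>{0..1} \<Longrightarrow> u < v \<Longrightarrow> g u < g v"
    and homeo_le: "\<And>u v. u\<in>{0..1} \<Longrightarrow> v\<in>{0..1} \<Longrightarrow> u \<le> v \<Longrightarrow> g u \<le> g v"
    and homeo0: "g 0 = 0" and homeo1: "g 1 = 1"
proof -
  have im: "g ` {0..1} = {0..1}" and sm: "strict_mono_on {0..1} g"
    using assms unfolding inc_homeo01_def by auto
  show gi: "\<And>u. u\<in>{0..1} \<Longrightarrow> g u \<in> {0..1}" using im by blast
  show gl: "\<And>u v. u\<in>{0..1} \<Longrightarrow> v\<in>{0..1} \<Longrightarrow> u < v \<Longrightarrow> g u < g v"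
    using sm strict_mono_onD by blast
  show "\<And>u v. u\<in>{0..1} \<Longrightarrow> v\<in>{0..1} \<Longrightarrow> u \<le> v \<Longrightarrow> g u \<le> g v"
    using gl by (metis order.order_iff_strict)
  obtain w where w: "w \<in> {0..1}" "g w = 0" using im by (metis atLeastAtMost_iff image_iff order_refl zero_le_one)
  show "g 0 = 0"
  proof (rule ccontr)
    assume "g 0 \<noteq> 0"
    hence "w \<noteq> 0" using w by auto
    hence "g 0 < g w" using gl[of 0 w] w by auto
    thus False using gi[of 0] w by auto
  qed
  obtain w where w: "w \<in> {0..1}" "g w = 1" using im by (metis atLeastAtMost_iff image_iff order_refl zero_le_one)
  show "g 1 = 1"
  proof (rule ccontr)
    assume "g 1 \<noteq> 1"
    hence "w \<noteq> 1" using w by auto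
    hence "g w < g 1" using gl[of w 1] w by auto
    thus False using gi[of 1] w by auto
  qed
qed

lemma id_homeo: "inc_homeo01 (\<lambda>x. x)"
  unfolding inc_homeo01_def by (auto simp: strict_mono_on_def continuous_on_id)

lemma frechet_le:
  assumes K: "\<forall>u\<in>{0..1}. \<forall>v\<in>{0..1}. norm (F v - G u) \<le> K"
    and g: "inc_homeo01 g" and b: "\<forall>u\<in>{0..1}. norm (F (g u) - G u) \<le> e"
  shows "frechet_dist F G \<le> e"
proof -
  have bdd: "bdd_above ((\<lambda>u. norm (F (h u) - G u)) ` {0..1})" if "inc_homeo01 h" for h
    using K homeo_in[OF that] by (intro bdd_aboveI2[of _ _ K]) auto
  have "bdd_below {(SUP t\<in>{0..1}. norm (F (h t) - G t)) | h. inc_homeo01 h}"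
  proof (rule bdd_belowI[of _ 0], clarify)
    fix h assume h: "inc_homeo01 h"
    have "norm (F (h 0) - G 0) \<le> (SUP t\<in>{0..1}. norm (F (h t) - G t))"
      by (rule cSUP_upper[OF _ bdd[OF h]]) auto
    thus "0 \<le> (SUP t\<in>{0..1}. norm (F (h t) - G t))" by (meson norm_ge_zero order_trans)
  qed
  moreover have "(SUP t\<in>{0..1}. norm (F (g t) - G t)) \<le> e"
    using b by (intro cSUP_least) auto
  ultimately show ?thesis unfolding frechet_dist_def
    by (intro cInf_lower2[of "(SUP t\<in>{0..1}. norm (F (g t) - G t))"]) (use g in auto)
qed

lemma frechet_lt:
  assumes K: "\<forall>u\<in>{0..1}. \<forall>v\<in>{0..1}. norm (F v - G u) \<le> K"
    and lt: "frechet_dist F G < e"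
  shows "\<exists>g. inc_homeo01 g \<and> (\<forall>u\<in>{0..1}. norm (F (g u) - G u) < e)"
proof -
  have "{(SUP t\<in>{0..1}. norm (F (h t) - G t)) | h. inc_homeo01 h} \<noteq> {}" using id_homeo by blast
  from cInf_lessD[OF this] lt obtain g where g: "inc_homeo01 g" and s: "(SUP t\<in>{0..1}. norm (F (g t) - G t)) < e"
    unfolding frechet_dist_def by blast
  have bdd: "bdd_above ((\<lambda>u. norm (F (g u) - G u)) ` {0..1})"
    using K homeo_in[OF g] by (intro bdd_aboveI2[of _ _ K]) auto
  have "\<forall>u\<in>{0..1}. norm (F (g u) - G u) < e"
    using cSUP_upper[OF _ bdd] s by (meson order_le_less_trans)
  thus ?thesis using g by blast
qed

lemma frechet_const: "frechet_dist (seg_curve (P a) (P a)) (subcurve P a a) \<le> 0"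
  by (rule frechet_le[of _ _ "0" "\<lambda>x. x"]) (auto simp: seg_curve_def subcurve_def id_homeo algebra_simps)

lemma seg_sub_bound:
  fixes P :: "real \<Rightarrow> 'a::real_normed_vector"
  assumes M: "\<forall>s\<in>{0..1}. norm (P s) \<le> M" and ab: "0 \<le> a" "a \<le> b" "b \<le> 1"
  shows "\<forall>u\<in>{0..1}. \<forall>v\<in>{0..1}. norm (seg_curve p q v - subcurve P a b u) \<le> norm p + norm q + M"
proof (intro ballI)
  fix u v :: real assume u: "u \<in> {0..1}" and v: "v \<in> {0..1}"
  have "u * (b - a) \<le> 1 * (b - a)" using u ab by (intro mult_right_mono) auto
  moreover have "0 \<le> u * (b - a)" using u ab by auto
  ultimately have "a + u*(b-a) \<in> {0..1}" using ab by auto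
  hence P: "norm (subcurve P a b u) \<le> M" using M unfolding subcurve_def by auto
  have "norm (seg_curve p q v) \<le> norm ((1-v) *\<^sub>R p) + norm (v *\<^sub>R q)"
    unfolding seg_curve_def by (rule norm_triangle_ineq)
  also have "\<dots> = (1-v) * norm p + v * norm q" using v by simp
  also have "\<dots> \<le> 1 * norm p + 1 * norm q" using v
    by (intro add_mono mult_right_mono) auto
  finally have "norm (seg_curve p q v) \<le> norm p + norm q" by simp
  thus "norm (seg_curve p q v - subcurve P a b u) \<le> norm p + norm q + M"
    using P norm_triangle_ineq4[of "seg_curve p q v" "subcurve P a b u"] by linarith
qed

lemma shortcut_tail:
  fixes P :: "real \<Rightarrow> 'a::real_normed_vector"
  assumes M: "\<forall>s\<in>{0..1}. norm (P s) \<le> M" and ab: "0 \<le> a" "a \<le> c" "c < b" "b \<le> 1"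
    and fd: "frechet_dist (seg_curve (P a) (P b)) (subcurve P a b) \<le> D"
  shows "frechet_dist (seg_curve (P c) (P b)) (subcurve P c b) \<le> 2*D"
proof (rule field_le_epsilon)
  fix \<epsilon> :: real assume ep: "0 < \<epsilon>"
  define e where "e = D + \<epsilon>/2"
  note K1 = seg_sub_bound[OF M, of a b "P a" "P b"]
  note K2 = seg_sub_bound[OF M, of c b "P c" "P b"]
  have "frechet_dist (seg_curve (P a) (P b)) (subcurve P a b) < e" using fd ep e_def by simp
  then obtain g where g: "inc_homeo01 g" and gb: "\<forall>u\<in>{0..1}. norm (seg_curve (P a) (P b) (g u) - subcurve P a b u) < e"
    using frechet_lt[OF K1] ab by auto
  define \<sigma> where "\<sigma> = (c-a)/(b-a)"
  have ba: "b - a > 0" using ab by simp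
  have s0: "0 \<le> \<sigma>" using ab ba unfolding \<sigma>_def by simp
  have s1: "\<sigma> < 1" using ab ba unfolding \<sigma>_def by (simp add: divide_less_eq)
  have sc: "a + \<sigma> * (b - a) = c" using ba unfolding \<sigma>_def by simp
  define r where "r = g \<sigma>"
  have r0: "0 \<le> r" using homeo_in[OF g, of \<sigma>] s0 s1 r_def by auto
  have r1: "r < 1" using homeo_less[OF g, of \<sigma> 1] homeo1[OF g] s0 s1 r_def by auto
  define g' where "g' = (\<lambda>u. (g (\<sigma> + u*(1-\<sigma>)) - r)/(1-r))"
  have w01: "\<sigma> + u*(1-\<sigma>) \<in> {\<sigma>..1}" if "u \<in> {0..1}" for u
  proof -
    have "u*(1-\<sigma>) \<le> 1*(1-\<sigma>)" using that s1 by (intro mult_right_mono) auto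
    moreover have "0 \<le> u*(1-\<sigma>)" using that s1 by auto
    ultimately show ?thesis by auto
  qed
  have gw: "g (\<sigma> + u*(1-\<sigma>)) = r + g' u * (1 - r)" for u
    unfolding g'_def using r1 by simp
  have g'in: "g' u \<in> {0..1}" if u: "u \<in> {0..1}" for u
  proof -
    have "r \<le> g (\<sigma> + u*(1-\<sigma>))" unfolding r_def using w01[OF u] s0 
      by (intro homeo_le[OF g]) auto
    moreover have "g (\<sigma> + u*(1-\<sigma>)) \<le> 1" using homeo_in[OF g, of "\<sigma> + u*(1-\<sigma>)"] w01[OF u] s0 by auto
    ultimately show ?thesis unfolding g'_def using r1 by (auto simp: divide_le_eq)
  qed
  have "inc_homeo01 g'"
    unfolding inc_homeo01_def
  proof (intro conjI)
    show "g' ` {0..1} = {0..1}"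
    proof
      show "g' ` {0..1} \<subseteq> {0..1}" using g'in by auto
      show "{0..1} \<subseteq> g' ` {0..1}"
      proof
        fix v :: real assume v: "v \<in> {0..1}"
        have "v * (1 - r) \<le> 1 - r" using mult_right_mono[of v 1 "1-r"] v r1 by auto
        moreover have vn: "0 \<le> v * (1 - r)" using v r1 by auto
        ultimately have "r + v * (1 - r) \<in> {0..1}" using v r0 r1 unfolding atLeastAtMost_iff by linarith
        then obtain s where s: "s \<in> {0..1}" "g s = r + v * (1 - r)"
          using g unfolding inc_homeo01_def by (metis imageE)
        have ss: "\<sigma> \<le> s"
        proof (rule ccontr)
          assume "\<not> \<sigma> \<le> s"
          hence "g s < r" unfolding r_def using s s0 s1 by (intro homeo_less[OF g]) auto
          thus False using s vn by linarith
        qed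
        define u where "u = (s - \<sigma>)/(1-\<sigma>)"
        have u: "u \<in> {0..1}" unfolding u_def using ss s s1 by (auto simp: divide_le_eq)
        have "\<sigma> + u*(1-\<sigma>) = s" unfolding u_def using s1 by simp
        hence "g' u = v" unfolding g'_def using s r1 by simp
        thus "v \<in> g' ` {0..1}" using u by blast
      qed
    qed
    show "continuous_on {0..1} g'"
    proof -
      have "continuous_on {0..1} (\<lambda>u. \<sigma> + u*(1-\<sigma>))" by (intro continuous_intros)
      moreover have "continuous_on ((\<lambda>u. \<sigma> + u*(1-\<sigma>)) ` {0..1}) g"
        using g w01 s0 unfolding inc_homeo01_def by (auto intro: continuous_on_subset)
      ultimately have "continuous_on {0..1} (g \<circ> (\<lambda>u. \<sigma> + u*(1-\<sigma>)))" by (rule continuous_on_compose)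
      thus ?thesis unfolding g'_def o_def using r1 by (intro continuous_intros) auto
    qed
    show "strict_mono_on {0..1} g'"
    proof (rule strict_mono_onI)
      fix u v :: real assume uv: "u \<in> {0..1}" "v \<in> {0..1}" "u < v"
      have "u*(1-\<sigma>) < v * (1-\<sigma>)" using uv s1 by simp
      hence "g (\<sigma> + u*(1-\<sigma>)) < g (\<sigma> + v * (1-\<sigma>))"
        using w01 uv s0 by (intro homeo_less[OF g]) auto
      thus "g' u < g' v" unfolding g'_def using r1 by (simp add: divide_strict_right_mono)
    qed
  qed
  moreover have "\<forall>u\<in>{0..1}. norm (seg_curve (P c) (P b) (g' u) - subcurve P c b u) \<le> 2*e"
  proof
    fix u :: real assume u: "u \<in> {0..1}"
    define w where "w = \<sigma> + u*(1-\<sigma>)"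
    define v where "v = g' u"
    have v: "v \<in> {0..1}" using g'in[OF u] v_def by simp
    define R where "R = seg_curve (P a) (P b) r"
    have R: "norm (R - P c) < e" using gb[rule_format, of \<sigma>] s0 s1 sc
      unfolding R_def r_def subcurve_def by auto
    have e1: "seg_curve (P a) (P b) (g w) = (1-v) *\<^sub>R R + v *\<^sub>R P b"
      unfolding w_def gw v_def R_def seg_curve_def by (simp add: algebra_simps)
    have e2: "subcurve P a b w = subcurve P c b u"
    proof -
      have "a + (\<sigma> + u*(1-\<sigma>))*(b-a) = (a + \<sigma>*(b-a)) + u*((b-a) - \<sigma>*(b-a))"
        by (simp add: algebra_simps)
      also have "\<dots> = c + u*(b-c)" using sc by (simp add: algebra_simps)
      finally show ?thesis unfolding subcurve_def w_def by simp
    qed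
    have w: "w \<in> {0..1}" using w01[OF u] s0 w_def by auto
    have "seg_curve (P c) (P b) (g' u) - subcurve P c b u
        = (1-v) *\<^sub>R (P c - R) + (seg_curve (P a) (P b) (g w) - subcurve P a b w)"
      unfolding v_def[symmetric] by (subst e1, subst e2, simp add: seg_curve_def algebra_simps)
    also have "norm \<dots> \<le> norm ((1-v) *\<^sub>R (P c - R)) + norm (seg_curve (P a) (P b) (g w) - subcurve P a b w)"
      by (rule norm_triangle_ineq)
    also have "\<dots> \<le> e + e"
    proof (rule add_mono)
      have "norm ((1-v) *\<^sub>R (P c - R)) = (1-v) * norm (R - P c)" using v by (simp add: norm_minus_commute)
      also have "\<dots> \<le> 1 * norm (R - P c)" using v by (intro mult_right_mono) auto
      finally show "norm ((1-v) *\<^sub>R (P c - R)) \<le> e" using R by simp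
      show "norm (seg_curve (P a) (P b) (g w) - subcurve P a b w) \<le> e" using gb w by (simp add: less_imp_le)
    qed
    finally show "norm (seg_curve (P c) (P b) (g' u) - subcurve P c b u) \<le> 2*e" by simp
  qed
  ultimately have "frechet_dist (seg_curve (P c) (P b)) (subcurve P c b) \<le> 2*e"
    using frechet_le[OF K2] ab by auto
  thus "frechet_dist (seg_curve (P c) (P b)) (subcurve P c b) \<le> 2*D + \<epsilon>" unfolding e_def by simp
qed

lemma shortcut_head:
  fixes P :: "real \<Rightarrow> 'a::real_normed_vector"
  assumes M: "\<forall>s\<in>{0..1}. norm (P s) \<le> M" and ab: "0 \<le> a" "a < c" "c \<le> b" "b \<le> 1"
    and fd: "frechet_dist (seg_curve (P a) (P b)) (subcurve P a b) \<le> D"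
  shows "frechet_dist (seg_curve (P a) (P c)) (subcurve P a c) \<le> 2*D"
proof (rule field_le_epsilon)
  fix \<epsilon> :: real assume ep: "0 < \<epsilon>"
  define e where "e = D + \<epsilon>/2"
  note K1 = seg_sub_bound[OF M, of a b "P a" "P b"]
  note K2 = seg_sub_bound[OF M, of a c "P a" "P c"]
  have "frechet_dist (seg_curve (P a) (P b)) (subcurve P a b) < e" using fd ep e_def by simp
  then obtain g where g: "inc_homeo01 g" and gb: "\<forall>u\<in>{0..1}. norm (seg_curve (P a) (P b) (g u) - subcurve P a b u) < e"
    using frechet_lt[OF K1] ab by auto
  define \<sigma> where "\<sigma> = (c-a)/(b-a)"
  have ba: "b - a > 0" using ab by simp
  have s0: "0 < \<sigma>" using ab ba unfolding \<sigma>_def by simp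
  have s1: "\<sigma> \<le> 1" using ab ba unfolding \<sigma>_def by (simp add: divide_le_eq)
  have sc: "\<sigma> * (b - a) = c - a" using ba unfolding \<sigma>_def by simp
  define r where "r = g \<sigma>"
  have r1: "r \<le> 1" using homeo_in[OF g, of \<sigma>] s0 s1 r_def by auto
  have r0: "0 < r" using homeo_less[OF g, of 0 \<sigma>] homeo0[OF g] s0 s1 r_def by auto
  define g' where "g' = (\<lambda>u. g (\<sigma> * u) / r)"
  have w01: "\<sigma> * u \<in> {0..\<sigma>}" if "u \<in> {0..1}" for u
  proof -
    have "\<sigma> * u \<le> \<sigma> * 1" using that s0 by (intro mult_left_mono) auto
    moreover have "0 \<le> \<sigma> * u" using that s0 by auto
    ultimately show ?thesis by auto
  qed
  have gw: "g (\<sigma> * u) = g' u * r" for u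
    unfolding g'_def using r0 by simp
  have g'in: "g' u \<in> {0..1}" if u: "u \<in> {0..1}" for u
  proof -
    have su: "0 \<le> \<sigma> * u" "\<sigma> * u \<le> \<sigma>" using w01[OF u] by auto
    have su3: "\<sigma> * u \<le> 1" using su(2) s1 by linarith
    have "g (\<sigma> * u) \<le> r" unfolding r_def using su su3 s0 s1
      by (intro homeo_le[OF g]) auto
    moreover have "0 \<le> g (\<sigma> * u)" using homeo_in[OF g, of "\<sigma> * u"] su su3 by auto
    ultimately show ?thesis unfolding g'_def using r0 by (auto simp: divide_le_eq)
  qed
  have "inc_homeo01 g'"
    unfolding inc_homeo01_def
  proof (intro conjI)
    show "g' ` {0..1} = {0..1}"
    proof
      show "g' ` {0..1} \<subseteq> {0..1}" using g'in by auto
      show "{0..1} \<subseteq> g' ` {0..1}"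
      proof
        fix v :: real assume v: "v \<in> {0..1}"
        have vr: "v * r \<le> r" using mult_right_mono[of v 1 r] v r0 by auto
        moreover have vn: "0 \<le> v * r" using v r0 by auto
        ultimately have "v * r \<in> {0..1}" using r1 unfolding atLeastAtMost_iff by linarith
        then obtain s where s: "s \<in> {0..1}" "g s = v * r"
          using g unfolding inc_homeo01_def by (metis imageE)
        have ss: "s \<le> \<sigma>"
        proof (rule ccontr)
          assume "\<not> s \<le> \<sigma>"
          hence "r < g s" unfolding r_def using s s0 s1 by (intro homeo_less[OF g]) auto
          thus False using s vr by linarith
        qed
        define u where "u = s / \<sigma>"
        have u: "u \<in> {0..1}" unfolding u_def using ss s s0 by (auto simp: divide_le_eq)
        have "\<sigma> * u = s" unfolding u_def using s0 by simp
        hence "g' u = v" unfolding g'_def using s r0 by simp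
        thus "v \<in> g' ` {0..1}" using u by blast
      qed
    qed
    show "continuous_on {0..1} g'"
    proof -
      have "continuous_on {0..1} (\<lambda>u. \<sigma> * u)" by (intro continuous_intros)
      moreover have "(\<lambda>u. \<sigma> * u) ` {0..1} \<subseteq> {0..1}"
      proof clarify
        fix u :: real assume "u \<in> {0..1}"
        hence "0 \<le> \<sigma> * u" "\<sigma> * u \<le> \<sigma>" using w01 by auto
        thus "\<sigma> * u \<in> {0..1}" using s1 by auto
      qed
      hence "continuous_on ((\<lambda>u. \<sigma> * u) ` {0..1}) g"
        using g unfolding inc_homeo01_def by (auto intro: continuous_on_subset)
      ultimately have "continuous_on {0..1} (g \<circ> (\<lambda>u. \<sigma> * u))" by (rule continuous_on_compose)
      thus ?thesis unfolding g'_def o_def using r0 by (intro continuous_intros) auto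
    qed
    show "strict_mono_on {0..1} g'"
    proof (rule strict_mono_onI)
      fix u v :: real assume uv: "u \<in> {0..1}" "v \<in> {0..1}" "u < v"
      have "\<sigma> * u < \<sigma> * v" using uv s0 by simp
      moreover have "0 \<le> \<sigma> * u" "\<sigma> * u \<le> \<sigma>" "0 \<le> \<sigma> * v" "\<sigma> * v \<le> \<sigma>"
        using w01[OF uv(1)] w01[OF uv(2)] by auto
      moreover have "\<sigma> * u \<le> 1" "\<sigma> * v \<le> 1" using calculation s1 by linarith+
      ultimately have "g (\<sigma> * u) < g (\<sigma> * v)"
        by (intro homeo_less[OF g]) auto
      thus "g' u < g' v" unfolding g'_def using r0 by (simp add: divide_strict_right_mono)
    qed
  qed
  moreover have "\<forall>u\<in>{0..1}. norm (seg_curve (P a) (P c) (g' u) - subcurve P a c u) \<le> 2*e"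
  proof
    fix u :: real assume u: "u \<in> {0..1}"
    define w where "w = \<sigma> * u"
    define v where "v = g' u"
    have v: "v \<in> {0..1}" using g'in[OF u] v_def by simp
    define R where "R = seg_curve (P a) (P b) r"
    have "a + \<sigma> * (b - a) = c" using sc by simp
    hence R: "norm (R - P c) < e" using gb[rule_format, of \<sigma>] s0 s1
      unfolding R_def r_def subcurve_def by auto
    have e1: "seg_curve (P a) (P b) (g w) = (1-v) *\<^sub>R P a + v *\<^sub>R R"
      unfolding w_def gw v_def R_def seg_curve_def by (simp add: algebra_simps)
    have e2: "subcurve P a b w = subcurve P a c u"
    proof -
      have "(\<sigma> * u)*(b-a) = u*(\<sigma>*(b-a))" by (simp add: algebra_simps)
      hence "(\<sigma> * u)*(b-a) = u*(c-a)" using sc by metis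
      thus ?thesis unfolding subcurve_def w_def by (simp only:)
    qed
    have "0 \<le> w" "w \<le> \<sigma>" using w01[OF u] w_def by auto
    hence w: "w \<in> {0..1}" using s1 by auto
    have "seg_curve (P a) (P c) (g' u) - subcurve P a c u
        = v *\<^sub>R (P c - R) + (seg_curve (P a) (P b) (g w) - subcurve P a b w)"
      unfolding v_def[symmetric] by (subst e1, subst e2, simp add: seg_curve_def algebra_simps)
    also have "norm \<dots> \<le> norm (v *\<^sub>R (P c - R)) + norm (seg_curve (P a) (P b) (g w) - subcurve P a b w)"
      by (rule norm_triangle_ineq)
    also have "\<dots> \<le> e + e"
    proof (rule add_mono)
      have "norm (v *\<^sub>R (P c - R)) = v * norm (R - P c)" using v by (simp add: norm_minus_commute)
      also have "\<dots> \<le> 1 * norm (R - P c)" using v by (intro mult_right_mono) auto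
      finally show "norm (v *\<^sub>R (P c - R)) \<le> e" using R by simp
      show "norm (seg_curve (P a) (P b) (g w) - subcurve P a b w) \<le> e" using gb w by (simp add: less_imp_le)
    qed
    finally show "norm (seg_curve (P a) (P c) (g' u) - subcurve P a c u) \<le> 2*e" by simp
  qed
  ultimately have "frechet_dist (seg_curve (P a) (P c)) (subcurve P a c) \<le> 2*e"
    using frechet_le[OF K2] ab by auto
  thus "frechet_dist (seg_curve (P a) (P c)) (subcurve P a c) \<le> 2*D + \<epsilon>" unfolding e_def by simp
qed

lemma poly_t:
  assumes "polygonal P t m"
  shows poly_t_less: "\<And>i j. i \<in> {1..m} \<Longrightarrow> j \<in> {1..m} \<Longrightarrow> i < j \<Longrightarrow> t i < t j"
    and poly_t_le: "\<And>i j. i \<in> {1..m} \<Longrightarrow> j \<in> {1..m} \<Longrightarrow> i \<le> j \<Longrightarrow> t i \<le> t j"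
    and poly_t_in: "\<And>i. i \<in> {1..m} \<Longrightarrow> t i \<in> {0..1}"
proof -
  have sm: "strict_mono_on {1..m} t" and t1: "t 1 = 0" and tm: "t m = 1" and m1: "m \<ge> 1"
    using assms unfolding polygonal_def by blast+
  show l: "\<And>i j. i \<in> {1..m} \<Longrightarrow> j \<in> {1..m} \<Longrightarrow> i < j \<Longrightarrow> t i < t j"
    using sm strict_mono_onD by blast
  show le: "\<And>i j. i \<in> {1..m} \<Longrightarrow> j \<in> {1..m} \<Longrightarrow> i \<le> j \<Longrightarrow> t i \<le> t j"
    using l by (metis order.order_iff_strict)
  show "t i \<in> {0..1}" if i: "i \<in> {1..m}" for i
  proof -
    have "t 1 \<le> t i" using le[of 1 i] i m1 by auto
    moreover have "t i \<le> t m" using le[of i m] i by auto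
    ultimately show ?thesis using t1 tm by simp
  qed
qed

lemma poly_bound:
  fixes P :: "real \<Rightarrow> 'a::real_normed_vector"
  assumes pg: "polygonal P t m"
  shows "\<exists>M. \<forall>s\<in>{0..1}. norm (P s) \<le> M"
proof -
  define M where "M = 3 * (\<Sum>i\<in>{1..m}. norm (P (t i)))"
  have m1: "m \<ge> 1" and t1: "t 1 = 0" and tm: "t m = 1"
    and pc: "\<forall>i\<in>{1..<m}. \<forall>s\<in>{t i..t (Suc i)}.
        P s = P (t i) + ((s - t i) / (t (Suc i) - t i)) *\<^sub>R (P (t (Suc i)) - P (t i))"
    using pg unfolding polygonal_def by blast+
  have m2: "m \<ge> 2" using m1 t1 tm by (cases "m = 1") auto
  have le: "norm (P (t i)) \<le> (\<Sum>i\<in>{1..m}. norm (P (t i)))" if "i \<in> {1..m}" for i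
    using that by (intro member_le_sum) auto
  have "norm (P s) \<le> M" if s: "s \<in> {0..1}" for s
  proof -
    define S where "S = {i\<in>{1..<m}. t i \<le> s}"
    have fin: "finite S" unfolding S_def by auto
    have "1 \<in> S" unfolding S_def using m2 t1 s by auto
    hence ne: "S \<noteq> {}" by auto
    define i where "i = Max S"
    have iS: "i \<in> S" unfolding i_def using fin ne by (rule Max_in)
    hence i: "i \<in> {1..<m}" "t i \<le> s" unfolding S_def by auto
    have si: "s \<le> t (Suc i)"
    proof (cases "Suc i < m")
      case True
      show ?thesis
      proof (rule ccontr)
        assume "\<not> s \<le> t (Suc i)"
        hence "Suc i \<in> S" unfolding S_def using True by auto
        hence "Suc i \<le> i" unfolding i_def using fin by (simp add: Max_ge)
        thus False by simp
      qed
    next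
      case False
      hence "Suc i = m" using i by auto
      thus ?thesis using tm s by auto
    qed
    have lt: "t i < t (Suc i)" using poly_t_less[OF pg, of i "Suc i"] i by auto
    define lam where "lam = (s - t i) / (t (Suc i) - t i)"
    have l01: "0 \<le> lam" "lam \<le> 1" unfolding lam_def using lt i si by (auto simp: divide_le_eq)
    have "P s = P (t i) + lam *\<^sub>R (P (t (Suc i)) - P (t i))"
      using bspec[OF bspec[OF pc, of i], of s] i si unfolding lam_def by simp
    hence "norm (P s) \<le> norm (P (t i)) + norm (lam *\<^sub>R (P (t (Suc i)) - P (t i)))"
      by (simp only: norm_triangle_ineq)
    also have "norm (lam *\<^sub>R (P (t (Suc i)) - P (t i))) = lam * norm (P (t (Suc i)) - P (t i))"
      using l01 by simp
    also have "\<dots> \<le> 1 * norm (P (t (Suc i)) - P (t i))" using l01 by (intro mult_right_mono) auto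
    also have "\<dots> \<le> norm (P (t (Suc i))) + norm (P (t i))" using norm_triangle_ineq4 by simp
    finally have "norm (P s) \<le> 2 * norm (P (t i)) + norm (P (t (Suc i)))" by simp
    moreover have "norm (P (t i)) \<le> (\<Sum>i\<in>{1..m}. norm (P (t i)))" using le i by auto
    moreover have "norm (P (t (Suc i))) \<le> (\<Sum>i\<in>{1..m}. norm (P (t i)))" using le[of "Suc i"] i by auto
    ultimately show ?thesis unfolding M_def by linarith
  qed
  thus ?thesis by blast
qed

theorem mainTheorem3:
  fixes P :: "real \<Rightarrow> 'a::euclidean_space" and t :: "nat \<Rightarrow> real" and m :: nat and \<Delta> :: real
  assumes "polygonal P t m" and "\<Delta> > 0" and "z \<in> {1..m-1}"
  shows "(\<forall>x\<in>{x_idx P t \<Delta> z..z}. frechet_dist (tau P t x z) (subcurve P (t x) (t z)) \<le> 4 * \<Delta>) \<and>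
         (\<forall>y\<in>{z+1..y_idx P t m \<Delta> z}. frechet_dist (tau P t (z+1) y) (subcurve P (t (z+1)) (t y)) \<le> 4 * \<Delta>) \<and>
         (\<forall>x\<in>{1..<x_idx P t \<Delta> z}. frechet_dist (tau P t x z) (subcurve P (t x) (t z)) > 2 * \<Delta>) \<and>
         (\<forall>y\<in>{y_idx P t m \<Delta> z<..m}. frechet_dist (tau P t (z+1) y) (subcurve P (t (z+1)) (t y)) > 2 * \<Delta>)"
proof -
  note pg = assms(1)
  obtain M where M: "\<forall>s\<in>{0..1}. norm (P s) \<le> M" using poly_bound[OF pg] by blast
  have z: "1 \<le> z" "z + 1 \<le> m" using assms(3) by auto
  define PX where "PX = (\<lambda>x'. x' \<in> {1..z} \<and>
     (\<forall>x\<in>{x'..z}. frechet_dist (tau P t x z) (subcurve P (t x) (t z)) \<le> 4 * \<Delta>))"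
  define PY where "PY = (\<lambda>y'. y' \<in> {z+1..m} \<and>
     (\<forall>y\<in>{z+1..y'}. frechet_dist (tau P t (z+1) y) (subcurve P (t (z+1)) (t y)) \<le> 4 * \<Delta>))"
  have xi: "x_idx P t \<Delta> z = Least PX" unfolding x_idx_def PX_def by simp
  have yi: "y_idx P t m \<Delta> z = Greatest PY" unfolding y_idx_def PY_def by simp
  have const: "frechet_dist (tau P t i i) (subcurve P (t i) (t i)) \<le> 4 * \<Delta>" for i
    using frechet_const[of P "t i"] assms(2) unfolding tau_def by simp
  have PXz: "PX z" unfolding PX_def using z const by auto
  have PYz: "PY (z+1)" unfolding PY_def using z const by auto
  have PXl: "PX (Least PX)" using PXz by (rule LeastI)
  have PYbd: "\<And>y. PY y \<Longrightarrow> y \<le> m" unfolding PY_def by auto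
  have PYg: "PY (Greatest PY)" by (rule GreatestI_nat[where P=PY, OF PYz PYbd])
  have A: "\<forall>x\<in>{x_idx P t \<Delta> z..z}. frechet_dist (tau P t x z) (subcurve P (t x) (t z)) \<le> 4 * \<Delta>"
    using PXl unfolding xi PX_def by blast
  have B: "\<forall>y\<in>{z+1..y_idx P t m \<Delta> z}. frechet_dist (tau P t (z+1) y) (subcurve P (t (z+1)) (t y)) \<le> 4 * \<Delta>"
    using PYg unfolding yi PY_def by blast
  have C: "\<forall>x\<in>{1..<x_idx P t \<Delta> z}. frechet_dist (tau P t x z) (subcurve P (t x) (t z)) > 2 * \<Delta>"
  proof (rule ballI, rule ccontr)
    fix x assume x: "x \<in> {1..<x_idx P t \<Delta> z}"
      and "\<not> frechet_dist (tau P t x z) (subcurve P (t x) (t z)) > 2 * \<Delta>"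
    hence fx: "frechet_dist (seg_curve (P (t x)) (P (t z))) (subcurve P (t x) (t z)) \<le> 2 * \<Delta>"
      unfolding tau_def by simp
    have lz: "Least PX \<le> z" using PXl unfolding PX_def atLeastAtMost_iff by blast
    have x1: "1 \<le> x" "x < Least PX" using x unfolding xi by auto
    have xz: "x < z" using x1 lz by linarith
    have "PX x" unfolding PX_def
    proof (intro conjI ballI)
      show "x \<in> {1..z}" using x1 xz by simp
      fix x' assume x': "x' \<in> {x..z}"
      have im: "x \<in> {1..m}" "x' \<in> {1..m}" "z \<in> {1..m}" using x' x1 xz z by auto
      show "frechet_dist (tau P t x' z) (subcurve P (t x') (t z)) \<le> 4 * \<Delta>"
      proof (cases "x' = z")
        case True thus ?thesis using const by simp
      next
        case False
        have "x' < z" using x' False by auto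
        hence h3: "t x' < t z" using poly_t_less[OF pg, of x' z] im by blast
        have h2: "t x \<le> t x'" using poly_t_le[OF pg, of x x'] x' im by auto
        have h1: "t x \<in> {0..1}" "t z \<in> {0..1}" using poly_t_in[OF pg] im by blast+
        have "frechet_dist (seg_curve (P (t x')) (P (t z))) (subcurve P (t x') (t z)) \<le> 2 * (2 * \<Delta>)"
          using h1 h2 h3 by (intro shortcut_tail[OF M _ _ _ _ fx]) simp_all
        thus ?thesis unfolding tau_def by simp
      qed
    qed
    hence "Least PX \<le> x" by (rule Least_le)
    thus False using x1 by linarith
  qed
  have D: "\<forall>y\<in>{y_idx P t m \<Delta> z<..m}. frechet_dist (tau P t (z+1) y) (subcurve P (t (z+1)) (t y)) > 2 * \<Delta>"
  proof (rule ballI, rule ccontr)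
    fix y assume y: "y \<in> {y_idx P t m \<Delta> z<..m}"
      and "\<not> frechet_dist (tau P t (z+1) y) (subcurve P (t (z+1)) (t y)) > 2 * \<Delta>"
    hence fy: "frechet_dist (seg_curve (P (t (z+1))) (P (t y))) (subcurve P (t (z+1)) (t y)) \<le> 2 * \<Delta>"
      unfolding tau_def by simp
    have lz: "z + 1 \<le> Greatest PY" using PYg unfolding PY_def atLeastAtMost_iff by blast
    have y1: "y \<le> m" "Greatest PY < y" using y unfolding yi by auto
    have yz: "z + 1 < y" using y1 lz by linarith
    have "PY y" unfolding PY_def
    proof (intro conjI ballI)
      show "y \<in> {z+1..m}" using y1 yz by simp
      fix y' assume y': "y' \<in> {z+1..y}"
      have im: "y \<in> {1..m}" "y' \<in> {1..m}" "z+1 \<in> {1..m}" using y' y1 yz z by auto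
      show "frechet_dist (tau P t (z+1) y') (subcurve P (t (z+1)) (t y')) \<le> 4 * \<Delta>"
      proof (cases "y' = z + 1")
        case True thus ?thesis using const by simp
      next
        case False
        have "z + 1 < y'" using y' False by auto
        hence h3: "t (z+1) < t y'" using poly_t_less[OF pg, of "z+1" y'] im by blast
        have h2: "t y' \<le> t y" using poly_t_le[OF pg, of y' y] y' im by auto
        have h1: "t (z+1) \<in> {0..1}" "t y \<in> {0..1}" using poly_t_in[OF pg] im by blast+
        have "frechet_dist (seg_curve (P (t (z+1))) (P (t y'))) (subcurve P (t (z+1)) (t y')) \<le> 2 * (2 * \<Delta>)"
          using h1 h2 h3 by (intro shortcut_head[OF M _ _ _ _ fy]) simp_all
        thus ?thesis unfolding tau_def by simp
      qed
    qed
    hence "y \<le> Greatest PY" using PYbd by (rule Greatest_le_nat)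
    thus False using y1 by linarith
  qed
  show ?thesis using A B C D by blast
qed

end
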